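(* Let $n\ge2$ and let $A$ be an $n\times n$ binary matrix with zero diagonal. The facets-pairing structure $\mathcal{F}_A$ on $\mathcal{C}^n$ is perfect if and only if $A$ is a Bott matrix.
   Context: $\mathcal{C}^n=\{x\in\mathbb{R}^n: -\tfrac14\le x_i\le\tfrac14\}$; $\mathbf{F}(i)$, $\mathbf{F}(-i)$ ($1\le i\le n$) are the facets in $\{x_i=\tfrac14\}$, $\{x_i=-\tfrac14\}$. Binary matrices have entries in $\mathbb{Z}_2$; $A^i_k$ denotes the $(i,k)$ entry viewed as $0$ or $1$. A Bott matrix is a binary square matrix conjugate by a permutation matrix to a strictly upper triangular binary matrix. $\mathcal{F}_A$ pairs $\mathbf{F}(j)$ with $\mathbf{F}(-j)$ via $\tau^A_j:\mathbf{F}(j)\to\mathbf{F}(-j)$, $\tau^A_j(x)=y$ with $y_{|j|}=-x_{|j|}$ and $y_k=(-1)^{A^{|j|}_k}x_k$ for $k\ne|j|$. A composition $\tau^A_{k_m}\circ\dots\circ\tau^A_{k_1}$ applied to a proper face $f$ is valid if $f\subset\mathbf{F}(k_1)$ and $\tau^A_{k_i}\circ\dots\circ\tau^A_{k_1}(f)\subset\mathbf{F}(k_{i+1})$ for $1\le i<m$ ($m=0$ allowed). The face family $\widehat f$ is the set of faces $\tau^A_{k_m}\circ\dots\circ\tau^A_{k_1}(f)$ over all valid compositions. $\mathcal{F}_A$ is perfect if for every proper face $f$ of codimension $s$, $\widehat f$ has exactly $2^s$ elements. *)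

theory Defs
  imports "HOL-Analysis.Analysis" "HOL-Library.Z2"
begin

text \<open>The cube C^n = [-1/4,1/4]^n, with coordinates indexed by a finite type 'n
  (n = CARD('n)). Binary matrices have entries in the field Z_2 (type bit).\<close>

definition cube :: "(real ^ 'n) set" where
  "cube = {x. \<forall>i. - (1/4) \<le> x $ i \<and> x $ i \<le> 1/4}"

text \<open>Signed indices: (i, True) stands for i, (i, False) for -i.
  facet (i,True) = F(i) in {x_i = 1/4}, facet (i,False) = F(-i) in {x_i = -1/4}.\<close>

definition facet :: "'n \<times> bool \<Rightarrow> (real ^ 'n) set" where
  "facet j = {x \<in> cube. x $ fst j = (if snd j then 1/4 else - (1/4))}"

text \<open>tau^A_j depends only on |j| = fst j.\<close>
definition tau :: "bit ^ 'n ^ 'n \<Rightarrow> 'n \<Rightarrow> real ^ 'n \<Rightarrow> real ^ 'n" where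
  "tau A i x = (\<chi> k. if k = i then - (x $ k)
                      else (if A $ i $ k = 1 then - (x $ k) else x $ k))"

text \<open>Composition tau_{k_m} o ... o tau_{k_1} applied to a face f, for the list [k_1,...,k_m].\<close>
fun compose_tau :: "bit ^ 'n ^ 'n \<Rightarrow> ('n \<times> bool) list \<Rightarrow> (real ^ 'n) set \<Rightarrow> (real ^ 'n) set" where
  "compose_tau A [] f = f"
| "compose_tau A (k # ks) f = compose_tau A ks (tau A (fst k) ` f)"

fun valid_comp :: "bit ^ 'n ^ 'n \<Rightarrow> ('n \<times> bool) list \<Rightarrow> (real ^ 'n) set \<Rightarrow> bool" where
  "valid_comp A [] f = True"
| "valid_comp A (k # ks) f = (f \<subseteq> facet k \<and> valid_comp A ks (tau A (fst k) ` f))"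

definition face_family :: "bit ^ 'n ^ 'n \<Rightarrow> (real ^ 'n) set \<Rightarrow> (real ^ 'n) set set" where
  "face_family A f = {compose_tau A ks f | ks. valid_comp A ks f}"

definition proper_face :: "(real ^ 'n) set \<Rightarrow> bool" where
  "proper_face f \<longleftrightarrow> f face_of cube \<and> f \<noteq> {} \<and> f \<noteq> cube"

definition codim :: "(real ^ 'n) set \<Rightarrow> nat" where
  "codim f = nat (int CARD('n) - aff_dim f)"

definition perfect :: "bit ^ 'n ^ 'n \<Rightarrow> bool" where
  "perfect A \<longleftrightarrow> (\<forall>f. proper_face f \<longrightarrow> card (face_family A f) = 2 ^ codim f)"

text \<open>Bott matrix: conjugate by a permutation matrix to a strictly upper triangular matrix.
  Indices of 'n are identified with 0..<n via a bijection sigma; P A P^T has (i,k) entry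
  A (sigma i) (sigma k).\<close>
definition bott_matrix :: "bit ^ 'n ^ 'n \<Rightarrow> bool" where
  "bott_matrix A \<longleftrightarrow> (\<exists>\<sigma> :: nat \<Rightarrow> 'n. bij_betw \<sigma> {0..<CARD('n)} UNIV \<and>
      (\<forall>i < CARD('n). \<forall>k < CARD('n). A $ (\<sigma> i) $ (\<sigma> k) \<noteq> 0 \<longrightarrow> i < k))"

end

theory Submission
  imports Defs
begin


definition Fc :: "'n set \<Rightarrow> real ^ 'n \<Rightarrow> (real ^ 'n) set" where
  "Fc T q = {y \<in> cube. \<forall>i\<in>T. y $ i = q $ i}"

definition flip :: "real ^ 'n \<Rightarrow> 'n set \<Rightarrow> real ^ 'n" where
  "flip q X = (\<chi> k. if k \<in> X then - (q $ k) else q $ k)"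

definition sd :: "'a set \<Rightarrow> 'a set \<Rightarrow> 'a set" where
  "sd X Y = (X - Y) \<union> (Y - X)"

definition D :: "bit ^ 'n ^ 'n \<Rightarrow> 'n \<Rightarrow> 'n set" where
  "D A i = {k. k = i \<or> A $ i $ k = 1}"

definition signed :: "'n set \<Rightarrow> real ^ 'n \<Rightarrow> bool" where
  "signed T q \<longleftrightarrow> q \<in> cube \<and> (\<forall>i\<in>T. \<bar>q $ i\<bar> = 1/4)"

lemma cube_iff: "x \<in> cube \<longleftrightarrow> (\<forall>i. \<bar>x $ i\<bar> \<le> 1/4)"
proof -
  have "\<And>i. (- (1/4) \<le> x $ i \<and> x $ i \<le> 1/4) = (\<bar>x $ i\<bar> \<le> (1/4::real))" by linarith
  thus ?thesis unfolding cube_def by simp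
qed

lemma tau_flip: "tau A i = (\<lambda>x. flip x (D A i))"
  by (rule ext) (simp add: tau_def flip_def D_def vec_eq_iff)

lemma flip_flip: "flip (flip q X) Y = flip q (sd X Y)"
  by (simp add: flip_def sd_def vec_eq_iff)

lemma flip_comp [simp]: "flip q X $ k = (if k \<in> X then - (q $ k) else q $ k)"
  by (simp add: flip_def)

lemma flip_cube: "flip q X \<in> cube \<longleftrightarrow> q \<in> cube"
  by (simp add: cube_iff)

lemma signed_flip: "signed T (flip q X) \<longleftrightarrow> signed T q"
  by (simp add: signed_def cube_iff)

lemma flip_Fc: "flip y X \<in> Fc T q \<longleftrightarrow> y \<in> Fc T (flip q X)"
  by (auto simp: Fc_def flip_cube)

lemma flip_invol: "flip (flip y X) X = y"
  by (simp add: vec_eq_iff)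

lemma image_flip_Fc: "(\<lambda>x. flip x X) ` Fc T q = Fc T (flip q X)"
proof safe
  fix y assume "y \<in> Fc T q" thus "flip y X \<in> Fc T (flip q X)"
    by (metis flip_Fc flip_invol)
next
  fix y assume "y \<in> Fc T (flip q X)"
  hence "flip y X \<in> Fc T q" by (simp add: flip_Fc)
  thus "y \<in> (\<lambda>x. flip x X) ` Fc T q" by (metis flip_invol image_eqI)
qed

lemma Fc_inter: "Fc T (flip q X) = Fc T (flip q (X \<inter> T))"
  by (auto simp: Fc_def)

lemma Fc_subset_facet:
  assumes "signed T q"
  shows "Fc T q \<subseteq> facet (i, b) \<longleftrightarrow> i \<in> T \<and> q $ i = (if b then 1/4 else - (1/4))"
proof
  assume H: "Fc T q \<subseteq> facet (i, b)"
  show "i \<in> T \<and> q $ i = (if b then 1/4 else - (1/4))"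
  proof (cases "i \<in> T")
    case True
    have "q \<in> Fc T q" using assms by (simp add: Fc_def signed_def)
    with H True show ?thesis by (auto simp: facet_def)
  next
    case False
    let ?z = "\<chi> k. if k = i then 0 else q $ k"
    have "?z \<in> Fc T q" using assms False by (auto simp: Fc_def signed_def cube_iff)
    with H have "?z \<in> facet (i,b)" by blast
    thus ?thesis by (simp add: facet_def split: if_splits)
  qed
next
  assume "i \<in> T \<and> q $ i = (if b then 1/4 else - (1/4))"
  thus "Fc T q \<subseteq> facet (i, b)" by (auto simp: Fc_def facet_def)
qed



inductive_set Rf :: "bit ^ 'n ^ 'n \<Rightarrow> 'n set \<Rightarrow> 'n set set" for A T where
  Rf0: "{} \<in> Rf A T"
| RfS: "X \<in> Rf A T \<Longrightarrow> i \<in> T \<Longrightarrow> sd X (D A i) \<in> Rf A T"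

lemma abs_quarter: "\<bar>v::real\<bar> = 1/4 \<Longrightarrow> v = (if v > 0 then 1/4 else - (1/4))"
  by (cases "v < 0") (auto simp: abs_if)

lemma sd_comm: "sd X Y = sd Y X" by (auto simp: sd_def)

lemma valid_append: "valid_comp A (ks @ [k]) f \<longleftrightarrow> valid_comp A ks f \<and> compose_tau A ks f \<subseteq> facet k"
  by (induction ks arbitrary: f) auto

lemma compose_append: "compose_tau A (ks @ [k]) f = tau A (fst k) ` compose_tau A ks f"
  by (induction ks arbitrary: f) auto

lemma valid_to_Rf:
  assumes "valid_comp A ks (Fc T q)" "signed T q"
  shows "\<exists>X\<in>Rf A T. compose_tau A ks (Fc T q) = Fc T (flip q X)"
  using assms
proof (induction ks arbitrary: q)
  case Nil
  have "flip q {} = q" by (simp add: vec_eq_iff)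
  then show ?case using Rf0 by (metis compose_tau.simps(1))
next
  case (Cons k ks)
  obtain i b where k: "k = (i,b)" by (cases k)
  have sub: "Fc T q \<subseteq> facet (i,b)" using Cons.prems k by simp
  hence iT: "i \<in> T" using Fc_subset_facet[OF Cons.prems(2)] by blast
  have img: "tau A i ` Fc T q = Fc T (flip q (D A i))"
    by (simp add: tau_flip image_flip_Fc)
  have "valid_comp A ks (Fc T (flip q (D A i)))" using Cons.prems k img by simp
  moreover have "signed T (flip q (D A i))" using Cons.prems(2) signed_flip by blast
  ultimately obtain X where X: "X \<in> Rf A T" "compose_tau A ks (Fc T (flip q (D A i))) = Fc T (flip (flip q (D A i)) X)"
    using Cons.IH by blast
  have "sd X (D A i) \<in> Rf A T" using X(1) iT by (rule RfS)
  moreover have "compose_tau A (k # ks) (Fc T q) = Fc T (flip q (sd X (D A i)))"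
    using X(2) img k by (simp add: flip_flip sd_comm)
  ultimately show ?case by blast
qed

lemma Rf_to_valid:
  assumes "X \<in> Rf A T" "signed T q"
  shows "\<exists>ks. valid_comp A ks (Fc T q) \<and> compose_tau A ks (Fc T q) = Fc T (flip q X)"
  using assms(1)
proof (induction X rule: Rf.induct)
  case Rf0
  have "flip q {} = q" by (simp add: vec_eq_iff)
  then show ?case by (metis compose_tau.simps(1) valid_comp.simps(1))
next
  case (RfS X i)
  then obtain ks where ks: "valid_comp A ks (Fc T q)" "compose_tau A ks (Fc T q) = Fc T (flip q X)" by blast
  have sg: "signed T (flip q X)" using assms(2) signed_flip by blast
  define b where "b = (flip q X $ i > 0)"
  have "flip q X $ i = (if b then 1/4 else - (1/4))"
    using sg RfS.hyps(2) unfolding signed_def b_def using abs_quarter by blast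
  hence sub: "Fc T (flip q X) \<subseteq> facet (i,b)" using Fc_subset_facet[OF sg] RfS.hyps(2) by blast
  have "valid_comp A (ks @ [(i,b)]) (Fc T q)" using ks sub by (simp add: valid_append)
  moreover have "compose_tau A (ks @ [(i,b)]) (Fc T q) = Fc T (flip q (sd X (D A i)))"
    using ks by (simp add: compose_append tau_flip image_flip_Fc flip_flip)
  ultimately show ?case by blast
qed

lemma family_char:
  assumes "signed T q"
  shows "face_family A (Fc T q) = (\<lambda>X. Fc T (flip q X)) ` Rf A T"
proof
  show "face_family A (Fc T q) \<subseteq> (\<lambda>X. Fc T (flip q X)) ` Rf A T"
  proof
    fix g assume "g \<in> face_family A (Fc T q)"
    then obtain ks where "valid_comp A ks (Fc T q)" "g = compose_tau A ks (Fc T q)"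
      unfolding face_family_def by blast
    thus "g \<in> (\<lambda>X. Fc T (flip q X)) ` Rf A T" using valid_to_Rf[OF _ assms] by blast
  qed
next
  show "(\<lambda>X. Fc T (flip q X)) ` Rf A T \<subseteq> face_family A (Fc T q)"
  proof
    fix g assume "g \<in> (\<lambda>X. Fc T (flip q X)) ` Rf A T"
    then obtain X where "X \<in> Rf A T" "g = Fc T (flip q X)" by blast
    then obtain ks where "valid_comp A ks (Fc T q)" "compose_tau A ks (Fc T q) = g"
      using Rf_to_valid[OF _ assms] by metis
    thus "g \<in> face_family A (Fc T q)" unfolding face_family_def by blast
  qed
qed



lemma seg_bound:
  fixes a b c u :: real
  assumes "a \<le> c" "b \<le> c" "0 < u" "u < 1" "(1-u)*a + u*b = c"
  shows "a = c \<and> b = c"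
proof -
  have "(1-u)*(c-a) + u*(c-b) = 0" using assms(5) by (simp add: algebra_simps)
  moreover have "(1-u)*(c-a) \<ge> 0" "u*(c-b) \<ge> 0" using assms by auto
  ultimately have "(1-u)*(c-a) = 0" "u*(c-b) = 0" by linarith+
  thus ?thesis using assms(3,4) by auto
qed

lemma Fc_face:
  fixes q :: "real^'n"
  assumes "signed T q"
  shows "Fc T q face_of cube"
  unfolding face_of_def
proof (intro conjI ballI impI)
  show "Fc T q \<subseteq> cube" by (auto simp: Fc_def)
  show "convex (Fc T q)"
    unfolding convex_def
  proof (intro allI ballI impI)
    fix x y and u v :: real
    assume xy: "x \<in> Fc T q" "y \<in> Fc T q" and uv: "0 \<le> u" "0 \<le> v" "u + v = 1"
    have "\<bar>(u *\<^sub>R x + v *\<^sub>R y) $ i\<bar> \<le> 1/4" for i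
    proof -
      have "\<bar>x$i\<bar> \<le> 1/4" "\<bar>y$i\<bar> \<le> 1/4" using xy by (auto simp: Fc_def cube_iff)
      hence "\<bar>u * x$i + v * y$i\<bar> \<le> (u + v) * (1/4)"
      proof -
        have "\<bar>u * x$i + v * y$i\<bar> \<le> \<bar>u * x$i\<bar> + \<bar>v * y$i\<bar>" by (rule abs_triangle_ineq)
        also have "\<dots> = u * \<bar>x$i\<bar> + v * \<bar>y$i\<bar>" using uv by (simp add: abs_mult)
        also have "\<dots> \<le> u * (1/4) + v * (1/4)"
          using \<open>\<bar>x$i\<bar> \<le> 1/4\<close> \<open>\<bar>y$i\<bar> \<le> 1/4\<close> uv by (intro add_mono mult_left_mono) auto
        finally show ?thesis by (simp add: distrib_right)
      qed
      thus ?thesis using uv by simp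
    qed
    moreover have "(u *\<^sub>R x + v *\<^sub>R y) $ i = q $ i" if "i \<in> T" for i
    proof -
      have "u * q$i + v * q$i = q$i" using uv by (metis distrib_right mult_1)
      thus ?thesis using xy that by (simp add: Fc_def)
    qed
    ultimately show "u *\<^sub>R x + v *\<^sub>R y \<in> Fc T q" by (simp add: Fc_def cube_iff)
  qed
next
  fix a b x assume ab: "a \<in> cube" "b \<in> cube" and x: "x \<in> Fc T q" "x \<in> open_segment a b"
  then obtain u where u: "0 < u" "u < 1" "x = (1 - u) *\<^sub>R a + u *\<^sub>R b" by (auto simp: in_segment)
  have "a $ i = q $ i \<and> b $ i = q $ i" if iT: "i \<in> T" for i
  proof -
    have xi: "(1-u) * a$i + u * b$i = q$i" using x(1) u(3) iT by (simp add: Fc_def)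
    have ai: "\<bar>a$i\<bar> \<le> 1/4" "\<bar>b$i\<bar> \<le> 1/4" using ab by (auto simp: cube_iff)
    have al: "a$i \<le> 1/4" "b$i \<le> 1/4" "-a$i \<le> 1/4" "-b$i \<le> 1/4" using ai by (auto simp: abs_le_iff)
    have qi: "\<bar>q$i\<bar> = 1/4" using assms iT by (simp add: signed_def)
    show ?thesis
    proof (cases "q$i > 0")
      case True
      hence "q$i = 1/4" using qi by simp
      thus ?thesis using seg_bound[of "a$i" "1/4" "b$i" u] al u xi by auto
    next
      case False
      hence "q$i = -1/4" using qi by simp
      moreover have "(1-u) * (-a$i) + u * (-b$i) = -q$i" using xi by (simp add: algebra_simps)
      ultimately show ?thesis using seg_bound[of "-a$i" "1/4" "-b$i" u] al u by auto
    qed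
  qed
  thus "a \<in> Fc T q" "b \<in> Fc T q" using ab by (auto simp: Fc_def)
qed



lemma mid_bound:
  fixes a b c :: real
  assumes "\<bar>a\<bar> \<le> c" "\<bar>b\<bar> \<le> c" "\<bar>(1/2) * a + (1/2) * b\<bar> = c"
  shows "a = b \<and> \<bar>a\<bar> = c"
  using assms by (auto simp: abs_if split: if_splits)

lemma face_char:
  fixes f :: "(real^'n) set"
  assumes F: "f face_of cube" and ne: "f \<noteq> {}"
  shows "\<exists>T q. signed T q \<and> f = Fc T q"
proof -
  define Tp where "Tp x = {i. \<bar>(x::real^'n) $ i\<bar> = 1/4}" for x
  obtain p0 where "p0 \<in> f" using ne by blast
  then obtain p where p: "p \<in> f" "\<forall>x. x \<in> f \<longrightarrow> card (Tp p) \<le> card (Tp x)"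
    using ex_has_least_nat[of "\<lambda>x. x \<in> f" p0 "\<lambda>x. card (Tp x)"] by blast
  have fc: "f \<subseteq> cube" using F by (rule face_of_imp_subset)
  have cv: "convex f" using F by (rule face_of_imp_convex)
  have pc: "p \<in> cube" using p fc by blast
  have sg: "signed (Tp p) p" using pc by (simp add: signed_def Tp_def)
  have sub1: "f \<subseteq> Fc (Tp p) p"
  proof
    fix x assume x: "x \<in> f"
    have xc: "x \<in> cube" using x fc by blast
    have "x $ i = p $ i" if iT: "i \<in> Tp p" for i
    proof (rule ccontr)
      assume ne: "x $ i \<noteq> p $ i"
      define m where "m = (1/2) *\<^sub>R x + (1/2) *\<^sub>R p"
      have mf: "m \<in> f" unfolding m_def by (rule convexD[OF cv x p(1)]) auto
      have "Tp m \<subseteq> Tp p"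
      proof
        fix j assume "j \<in> Tp m"
        hence "\<bar>(1/2) * x$j + (1/2) * p$j\<bar> = 1/4" by (simp add: Tp_def m_def)
        moreover have "\<bar>x$j\<bar> \<le> 1/4" "\<bar>p$j\<bar> \<le> 1/4" using xc pc by (auto simp: cube_iff)
        ultimately have "x$j = p$j \<and> \<bar>x$j\<bar> = 1/4" using mid_bound by blast
        hence "\<bar>p$j\<bar> = 1/4" by metis
        thus "j \<in> Tp p" by (simp add: Tp_def)
      qed
      moreover have "i \<notin> Tp m"
      proof
        assume "i \<in> Tp m"
        hence "\<bar>(1/2) * x$i + (1/2) * p$i\<bar> = 1/4" by (simp add: Tp_def m_def)
        moreover have "\<bar>x$i\<bar> \<le> 1/4" "\<bar>p$i\<bar> \<le> 1/4" using xc pc by (auto simp: cube_iff)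
        ultimately have "x$i = p$i" using mid_bound by blast
        thus False using ne by simp
      qed
      ultimately have "Tp m \<subset> Tp p" using iT by blast
      hence "card (Tp m) < card (Tp p)" by (simp add: psubset_card_mono)
      thus False using p(2) mf by fastforce
    qed
    thus "x \<in> Fc (Tp p) p" using xc by (simp add: Fc_def)
  qed
  have sub2: "Fc (Tp p) p \<subseteq> f"
  proof
    fix y assume y: "y \<in> Fc (Tp p) p"
    show "y \<in> f"
    proof (cases "y = p")
      case True thus ?thesis using p by simp
    next
      case False
      have yc: "y \<in> cube" using y by (simp add: Fc_def)
      define S where "S = insert 1 ((\<lambda>i. 1/4 - \<bar>p$i\<bar>) ` (- Tp p))"
      define d where "d = Min S"
      have finS: "finite S" "S \<noteq> {}" by (auto simp: S_def)
      have lt: "\<bar>p$i\<bar> < 1/4" if "i \<notin> Tp p" for i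
        using that pc by (auto simp: Tp_def cube_iff less_le)
      have dpos: "d > 0" unfolding d_def using finS lt by (auto simp: S_def)
      have dle: "d \<le> 1/4 - \<bar>p$i\<bar>" if "i \<notin> Tp p" for i
        unfolding d_def using finS that by (auto simp: S_def intro!: Min_le)
      define z where "z = p + d *\<^sub>R (p - y)"
      have zc: "z \<in> cube" unfolding cube_iff
      proof
        fix i
        show "\<bar>z$i\<bar> \<le> 1/4"
        proof (cases "i \<in> Tp p")
          case True
          hence "y$i = p$i" using y by (simp add: Fc_def)
          thus ?thesis using pc by (simp add: z_def cube_iff)
        next
          case False
          have "\<bar>p$i\<bar> \<le> 1/4" "\<bar>y$i\<bar> \<le> 1/4" using pc yc by (auto simp: cube_iff)
          hence "\<bar>p$i - y$i\<bar> \<le> 1" by arith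
          hence "d * \<bar>p$i - y$i\<bar> \<le> d" using dpos by (simp add: mult_le_cancel_left1)
          moreover have "\<bar>z$i\<bar> \<le> \<bar>p$i\<bar> + d * \<bar>p$i - y$i\<bar>"
          proof -
            have "\<bar>z$i\<bar> = \<bar>p $ i + d * (p $ i - y $ i)\<bar>" by (simp add: z_def)
            also have "\<dots> \<le> \<bar>p$i\<bar> + \<bar>d * (p $ i - y $ i)\<bar>" by (rule abs_triangle_ineq)
            also have "\<dots> = \<bar>p$i\<bar> + d * \<bar>p $ i - y $ i\<bar>" using dpos by (simp add: abs_mult)
            finally show ?thesis .
          qed
          ultimately show ?thesis using dle[OF False] by linarith
        qed
      qed
      have "p \<in> open_segment y z"
        unfolding in_segment
      proof
        show "y \<noteq> z"
        proof
          assume "y = z"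
          hence "(1 + d) *\<^sub>R (p - y) = 0" by (simp add: z_def algebra_simps)
          thus False using dpos False by simp
        qed
        show "\<exists>u. 0 < u \<and> u < 1 \<and> p = (1 - u) *\<^sub>R y + u *\<^sub>R z"
        proof (intro exI conjI)
          show "0 < 1/(1+d)" using dpos by simp
          show "1/(1+d) < 1" using dpos by simp
          define u where "u = 1/(1+d)"
          have ud: "u*(1+d) = 1" using dpos by (simp add: u_def)
          have "(1 - u) *\<^sub>R y + u *\<^sub>R z = (1 - u*(1+d)) *\<^sub>R y + (u*(1+d)) *\<^sub>R p"
            by (simp add: z_def algebra_simps)
          thus "p = (1 - 1/(1+d)) *\<^sub>R y + (1/(1+d)) *\<^sub>R z" using ud by (simp add: u_def)
        qed
      qed
      thus ?thesis using face_ofD[OF F _ yc zc p(1)] by blast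
    qed
  qed
  show ?thesis using sg sub1 sub2 by blast
qed



lemma Fc_aff_dim:
  fixes q :: "real^'n"
  assumes sg: "signed T q"
  shows "aff_dim (Fc T q) = int CARD('n) - int (card T)"
proof -
  define q0 :: "real^'n" where "q0 = (\<chi> k. if k \<in> T then q$k else 0)"
  have qc: "q \<in> cube" using sg by (simp add: signed_def)
  have q0F: "q0 \<in> Fc T q" using qc by (auto simp: Fc_def q0_def cube_iff)
  hence "q0 \<in> affine hull (Fc T q)" by (simp add: hull_inc)
  hence ad: "aff_dim (Fc T q) = int (dim ((+) (- q0) ` Fc T q))" by (rule aff_dim_eq_dim)
  define G where "G = (+) (- q0) ` Fc T q"
  define V :: "(real^'n) set" where "V = {x. \<forall>i. i \<notin> (- T) \<longrightarrow> x$i = 0}"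
  have dV: "dim V = card (- T)" using dim_substandard_cart[where 'a=real and 'n='n, of "- T"] dim_vec_eq[of V] by (simp add: V_def)
  have GV: "G \<subseteq> V" by (auto simp: G_def V_def Fc_def q0_def)
  have VG: "V \<subseteq> span G"
  proof
    fix v assume v: "v \<in> V"
    define c where "c = 4 * norm v + 4"
    have cpos: "c > 0" by (simp add: c_def add_nonneg_pos)
    define w where "w = q0 + (1/c) *\<^sub>R v"
    have "w \<in> Fc T q"
      unfolding Fc_def cube_iff
    proof (intro CollectI conjI allI ballI)
      fix i
      show "\<bar>w$i\<bar> \<le> 1/4"
      proof (cases "i \<in> T")
        case True
        thus ?thesis using v qc by (simp add: w_def q0_def V_def cube_iff)
      next
        case False
        have "\<bar>v$i\<bar> \<le> norm v" by (rule component_le_norm_cart)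
        hence "\<bar>v$i\<bar> / c \<le> 1/4" using cpos by (simp add: c_def field_simps)
        thus ?thesis using False cpos by (simp add: w_def q0_def abs_mult abs_divide)
      qed
    next
      fix i assume "i \<in> T" thus "w $ i = q $ i" using v by (simp add: w_def q0_def V_def)
    qed
    hence "- q0 + w \<in> G" by (simp add: G_def)
    hence "c *\<^sub>R (- q0 + w) \<in> span G" by (intro span_mul span_base)
    moreover have "c *\<^sub>R (- q0 + w) = v" using cpos by (simp add: w_def)
    ultimately show "v \<in> span G" by simp
  qed
  have "dim G = dim V"
    using dim_subset[OF GV] dim_subset[OF VG] by simp
  hence "aff_dim (Fc T q) = int (card (- T))" using ad dV by (simp add: G_def)
  also have "\<dots> = int CARD('n) - int (card T)"
  proof -
    have "card (- T) = CARD('n) - card T" by (simp add: Compl_eq_Diff_UNIV card_Diff_subset)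
    moreover have "card T \<le> CARD('n)" by (simp add: card_mono)
    ultimately show ?thesis by simp
  qed
  finally show ?thesis .
qed

lemma Fc_codim: "signed T q \<Longrightarrow> codim (Fc T q) = card T"
  by (simp add: codim_def Fc_aff_dim)

lemma Fc_empty: "Fc {} q = cube" by (simp add: Fc_def)

lemma Fc_ne_cube:
  assumes "signed T q" "T \<noteq> {}"
  shows "Fc T q \<noteq> cube"
proof -
  obtain i where i: "i \<in> T" using assms by blast
  have qc: "q \<in> cube" "\<bar>q$i\<bar> = 1/4" using assms i by (auto simp: signed_def)
  have "flip q {i} \<in> cube" using qc by (simp add: flip_cube)
  moreover have "flip q {i} \<notin> Fc T q" using i qc by (auto simp: Fc_def)
  ultimately show ?thesis by blast
qed

lemma proper_face_iff:
  "proper_face f \<longleftrightarrow> (\<exists>T q. signed T q \<and> T \<noteq> {} \<and> f = Fc T q)"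
proof
  assume "proper_face f"
  hence f: "f face_of cube" "f \<noteq> {}" "f \<noteq> cube" by (auto simp: proper_face_def)
  then obtain T q where "signed T q" "f = Fc T q" using face_char by blast
  moreover have "T \<noteq> {}" using f(3) \<open>f = Fc T q\<close> Fc_empty by blast
  ultimately show "\<exists>T q. signed T q \<and> T \<noteq> {} \<and> f = Fc T q" by blast
next
  assume "\<exists>T q. signed T q \<and> T \<noteq> {} \<and> f = Fc T q"
  then obtain T q where H: "signed T q" "T \<noteq> {}" "f = Fc T q" by blast
  have "q \<in> f" using H by (simp add: Fc_def signed_def)
  thus "proper_face f" using Fc_face[OF H(1)] Fc_ne_cube[OF H(1,2)] H(3) by (auto simp: proper_face_def)
qed



lemma sd_sd: "sd (sd X Z) Z = X" by (auto simp: sd_def)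
lemma sd_Int: "sd Y Z \<inter> T = sd (Y \<inter> T) (Z \<inter> T)" by (auto simp: sd_def)

lemma bott_rank:
  fixes A :: "bit ^ 'n ^ 'n"
  assumes "bott_matrix A"
  obtains \<rho> :: "'n \<Rightarrow> nat" where "\<And>x. \<rho> x < CARD('n)" "\<And>x y. \<rho> x = \<rho> y \<Longrightarrow> x = y"
    "\<And>x y. A $ x $ y \<noteq> 0 \<Longrightarrow> \<rho> x < \<rho> y"
proof -
  obtain \<sigma> :: "nat \<Rightarrow> 'n" where bij: "bij_betw \<sigma> {0..<CARD('n)} UNIV"
    and ord: "\<forall>i < CARD('n). \<forall>k < CARD('n). A $ (\<sigma> i) $ (\<sigma> k) \<noteq> 0 \<longrightarrow> i < k"
    using assms unfolding bott_matrix_def by blast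
  define \<rho> where "\<rho> = the_inv_into {0..<CARD('n)} \<sigma>"
  have bij2: "bij_betw \<rho> UNIV {0..<CARD('n)}" unfolding \<rho>_def by (rule bij_betw_the_inv_into[OF bij])
  have r1: "\<rho> x < CARD('n)" for x using bij2 by (auto simp: bij_betw_def)
  have r2: "\<sigma> (\<rho> x) = x" for x unfolding \<rho>_def by (rule f_the_inv_into_f_bij_betw[OF bij]) simp
  show ?thesis
  proof
    show "\<rho> x < CARD('n)" for x by (rule r1)
    show "\<rho> x = \<rho> y \<Longrightarrow> x = y" for x y by (metis r2)
    show "A $ x $ y \<noteq> 0 \<Longrightarrow> \<rho> x < \<rho> y" for x y using ord r1[of x] r1[of y] r2[of x] r2[of y] by metis
  qed
qed

lemma bott_reach:
  fixes A :: "bit ^ 'n ^ 'n"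
  assumes "bott_matrix A"
  shows "X \<subseteq> T \<Longrightarrow> \<exists>Y\<in>Rf A T. Y \<inter> T = X"
proof -
  obtain \<rho> :: "'n \<Rightarrow> nat" where r1: "\<And>x. \<rho> x < CARD('n)" and r2: "\<And>x y. \<rho> x = \<rho> y \<Longrightarrow> x = y"
    and r3: "\<And>x y. A $ x $ y \<noteq> 0 \<Longrightarrow> \<rho> x < \<rho> y"
    using bott_rank[OF assms] by blast
  let ?n = "CARD('n)"
  have "\<forall>X. X \<subseteq> T \<longrightarrow> (\<forall>x\<in>X. ?n - m \<le> \<rho> x) \<longrightarrow> (\<exists>Y\<in>Rf A T. Y \<inter> T = X)" for m
  proof (induction m)
    case 0
    show ?case
    proof (intro allI impI)
      fix X assume "X \<subseteq> T" "\<forall>x\<in>X. ?n - 0 \<le> \<rho> x"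
      hence "X = {}" using r1 by (metis diff_zero ex_in_conv leD)
      thus "\<exists>Y\<in>Rf A T. Y \<inter> T = X" using Rf0 by blast
    qed
  next
    case (Suc m)
    show ?case
    proof (intro allI impI)
      fix X assume XT: "X \<subseteq> T" and Xr: "\<forall>x\<in>X. ?n - Suc m \<le> \<rho> x"
      show "\<exists>Y\<in>Rf A T. Y \<inter> T = X"
      proof (cases "\<exists>x0\<in>X. \<rho> x0 = ?n - Suc m")
        case False
        hence "\<forall>x\<in>X. ?n - m \<le> \<rho> x" using Xr by fastforce
        thus ?thesis using Suc.IH XT by blast
      next
        case True
        then obtain x0 where x0: "x0 \<in> X" "\<rho> x0 = ?n - Suc m" by blast
        define X' where "X' = sd X (D A x0 \<inter> T)"
        have X'T: "X' \<subseteq> T" using XT by (auto simp: X'_def sd_def)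
        have "\<forall>x\<in>X'. ?n - m \<le> \<rho> x"
        proof
          fix x assume "x \<in> X'"
          hence "(x \<in> X \<and> x \<notin> D A x0) \<or> (x \<in> D A x0 \<and> x \<notin> X)" using XT by (auto simp: X'_def sd_def)
          thus "?n - m \<le> \<rho> x"
          proof
            assume H: "x \<in> X \<and> x \<notin> D A x0"
            hence "x \<noteq> x0" by (auto simp: D_def)
            hence "\<rho> x \<noteq> \<rho> x0" using r2 by blast
            thus ?thesis using Xr H x0(2) by fastforce
          next
            assume H: "x \<in> D A x0 \<and> x \<notin> X"
            hence "x \<noteq> x0" using x0 by blast
            hence "A $ x0 $ x \<noteq> 0" using H by (simp add: D_def)
            hence "\<rho> x0 < \<rho> x" by (rule r3)
            thus ?thesis using x0(2) by linarith
          qed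
        qed
        then obtain Y' where Y': "Y' \<in> Rf A T" "Y' \<inter> T = X'" using Suc.IH X'T by blast
        have "sd Y' (D A x0) \<in> Rf A T" using Y'(1) x0(1) XT by (blast intro: RfS)
        moreover have "sd Y' (D A x0) \<inter> T = X"
          using Y'(2) by (simp add: sd_Int X'_def sd_sd)
        ultimately show ?thesis by blast
      qed
    qed
  qed
  thus "X \<subseteq> T \<Longrightarrow> \<exists>Y\<in>Rf A T. Y \<inter> T = X" by (metis diff_self_eq_0 le0 cancel_comm_monoid_add_class.diff_cancel diff_le_self)
qed



lemma sink_order:
  fixes A :: "bit ^ 'n ^ 'n"
  assumes sink: "\<forall>U. U \<noteq> {} \<longrightarrow> (\<exists>v\<in>U. \<forall>w\<in>U. A$v$w = 0)" and diag: "\<forall>i. A$i$i = 0"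
  shows "\<exists>\<sigma>. bij_betw \<sigma> {0..<card U} U \<and> (\<forall>i<card U. \<forall>k<card U. A $ (\<sigma> i) $ (\<sigma> k) \<noteq> 0 \<longrightarrow> i < k)"
proof (induction "card U" arbitrary: U)
  case 0
  have "U = {}" using 0 by simp
  hence "bij_betw (\<lambda>_. undefined) {0..<card U} U" by (simp add: bij_betw_def)
  thus ?case by (intro exI[of _ "\<lambda>_. undefined"]) (simp add: \<open>U = {}\<close>)
next
  case (Suc m)
  hence Une: "U \<noteq> {}" by auto
  have finU: "finite U" using Suc.hyps(2) by (metis card.infinite nat.distinct(1))
  obtain v where v: "v \<in> U" "\<forall>w\<in>U. A$v$w = 0" using sink Une by blast
  have cU': "card (U - {v}) = m" using Suc.hyps(2) v(1) finU by simp
  obtain \<sigma>' where s': "bij_betw \<sigma>' {0..<m} (U - {v})"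
    "\<forall>i<m. \<forall>k<m. A $ (\<sigma>' i) $ (\<sigma>' k) \<noteq> 0 \<longrightarrow> i < k"
    using Suc.hyps(1)[OF cU'[symmetric]] cU' by auto
  define \<sigma> where "\<sigma> = \<sigma>'(m := v)"
  have b1: "bij_betw \<sigma> {0..<m} (U - {v})"
    using s'(1) unfolding \<sigma>_def by (rule bij_betw_cong[THEN iffD1, rotated]) auto
  have b2: "bij_betw \<sigma> {m} {v}" by (simp add: \<sigma>_def)
  have "bij_betw \<sigma> ({0..<m} \<union> {m}) ((U - {v}) \<union> {v})" by (rule bij_betw_combine[OF b1 b2]) auto
  moreover have "{0..<m} \<union> {m} = {0..<Suc m}" by auto
  moreover have "(U - {v}) \<union> {v} = U" using v(1) by auto
  ultimately have bij: "bij_betw \<sigma> {0..<card U} U" using Suc.hyps(2) by simp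
  have "A $ (\<sigma> i) $ (\<sigma> k) \<noteq> 0 \<longrightarrow> i < k" if "i < Suc m" "k < Suc m" for i k
  proof (cases "i = m")
    case True
    have "\<sigma> k \<in> U" using bij that(2) Suc.hyps(2) by (auto simp: bij_betw_def)
    thus ?thesis using True v(2) by (simp add: \<sigma>_def)
  next
    case False
    show ?thesis
    proof (cases "k = m")
      case True thus ?thesis using False that by simp
    next
      case False2: False
      thus ?thesis using False that s'(2) by (simp add: \<sigma>_def)
    qed
  qed
  hence "\<forall>i<card U. \<forall>k<card U. A $ (\<sigma> i) $ (\<sigma> k) \<noteq> 0 \<longrightarrow> i < k" using Suc.hyps(2)[symmetric] by simp
  thus ?case using bij by blast
qed

lemma sink_bott:
  fixes A :: "bit ^ 'n ^ 'n"
  assumes "\<forall>U. U \<noteq> {} \<longrightarrow> (\<exists>v\<in>U. \<forall>w\<in>U. A$v$w = 0)" "\<forall>i. A$i$i = 0"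
  shows "bott_matrix A"
  using sink_order[OF assms, of UNIV] unfolding bott_matrix_def by simp

lemma cyc_set:
  fixes A :: "bit ^ 'n ^ 'n"
  assumes nb: "\<not> bott_matrix A" and diag: "\<forall>i. A$i$i = 0"
  shows "\<exists>T. T \<noteq> {} \<and> (\<forall>v\<in>T. \<exists>u. u \<noteq> v \<and> {w\<in>T. A$v$w = 1} = {u})"
proof -
  define P where "P U \<longleftrightarrow> U \<noteq> {} \<and> (\<forall>v\<in>U. \<exists>w\<in>U. A$v$w = 1)" for U :: "'n set"
  have "\<not> (\<forall>U. U \<noteq> {} \<longrightarrow> (\<exists>v\<in>U. \<forall>w\<in>U. A$v$w = 0))" using sink_bott[OF _ diag] nb by blast
  then obtain U0 where U0: "U0 \<noteq> {}" "\<forall>v\<in>U0. \<not> (\<forall>w\<in>U0. A$v$w = 0)" by blast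
  have "\<forall>v\<in>U0. \<exists>w\<in>U0. A$v$w = 1"
  proof
    fix v assume "v \<in> U0"
    then obtain w where "w \<in> U0" "A$v$w \<noteq> 0" using U0(2) by blast
    thus "\<exists>w\<in>U0. A$v$w = 1" by auto
  qed
  hence "P U0" using U0(1) by (simp add: P_def)
  then obtain T where T: "P T" "\<forall>U. P U \<longrightarrow> card T \<le> card U"
    using ex_has_least_nat[of P U0 card] by blast
  have Tne: "T \<noteq> {}" using T(1) by (simp add: P_def)
  have key: "\<exists>w\<in>T. w \<noteq> u \<and> {x\<in>T. A$w$x = 1} = {u}" if uT: "u \<in> T" for u
  proof -
    have "T - {u} \<noteq> {}"
    proof
      assume "T - {u} = {}"
      hence "T = {u}" using uT by blast
      thus False using T(1) diag by (auto simp: P_def)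
    qed
    moreover have "card (T - {u}) < card T"
    proof -
      have "card T > 0" using uT by (auto simp: card_gt_0_iff)
      thus ?thesis using uT by simp
    qed
    ultimately have "\<not> P (T - {u})" using T(2) by (meson leD)
    hence "\<not> (\<forall>v\<in>T - {u}. \<exists>w\<in>T - {u}. A$v$w = 1)" using \<open>T - {u} \<noteq> {}\<close> by (simp add: P_def)
    then obtain w where w: "w \<in> T" "w \<noteq> u" "\<forall>x\<in>T - {u}. A$w$x \<noteq> 1" by blast
    obtain x where "x \<in> T" "A$w$x = 1" using T(1) w(1) by (auto simp: P_def)
    hence wu: "A$w$u = 1" using w(3) \<open>x \<in> T\<close> \<open>A$w$x = 1\<close> by blast
    have "\<forall>y\<in>T. A$w$y = 1 \<longrightarrow> y = u" using w(3) by blast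
    hence "{x\<in>T. A$w$x = 1} = {u}" using uT wu by blast
    thus ?thesis using w by blast
  qed
  define N where "N w = {x\<in>T. A$w$x = 1}" for w
  have key2: "\<forall>u\<in>T. \<exists>w. w \<in> T \<and> w \<noteq> u \<and> N w = {u}"
  proof
    fix u assume uT: "u \<in> T"
    from key[OF uT] obtain w where w: "w \<in> T" "w \<noteq> u" "N w = {u}" unfolding N_def by blast
    show "\<exists>w. w \<in> T \<and> w \<noteq> u \<and> N w = {u}" using w by blast
  qed
  then obtain W where W: "\<forall>u\<in>T. W u \<in> T \<and> W u \<noteq> u \<and> N (W u) = {u}"
    by (rule bchoice[THEN exE])
  have inj: "inj_on W T"
  proof (rule inj_onI)
    fix u1 u2 assume "u1 \<in> T" "u2 \<in> T" "W u1 = W u2"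
    have "N (W u1) = {u1}" using W \<open>u1 \<in> T\<close> by blast
    moreover have "N (W u2) = {u2}" using W \<open>u2 \<in> T\<close> by blast
    ultimately have "{u1} = {u2}" using \<open>W u1 = W u2\<close> by metis
    thus "u1 = u2" by simp
  qed
  have finT: "finite T" by simp
  have "W ` T \<subseteq> T" using W by auto
  hence WT: "W ` T = T" using endo_inj_surj[OF finT _ inj] by simp
  have "\<forall>v\<in>T. \<exists>u. u \<noteq> v \<and> N v = {u}"
  proof
    fix v assume "v \<in> T"
    then obtain u where u: "u \<in> T" "v = W u" using WT by (metis imageE)
    hence "u \<noteq> v \<and> N v = {u}" using W by (metis (no_types))
    thus "\<exists>u. u \<noteq> v \<and> N v = {u}" by (rule exI)
  qed
  thus ?thesis using Tne unfolding N_def by blast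
qed



lemma card_sd:
  assumes "finite X" "finite Y"
  shows "card (sd X Y) + 2 * card (X \<inter> Y) = card X + card Y"
proof -
  have e: "sd X Y = (X \<union> Y) - (X \<inter> Y)" by (auto simp: sd_def)
  have c1: "card ((X \<union> Y) - (X \<inter> Y)) = card (X \<union> Y) - card (X \<inter> Y)"
    using assms by (intro card_Diff_subset) auto
  have c2: "card X + card Y = card (X \<union> Y) + card (X \<inter> Y)" using assms by (rule card_Un_Int)
  have c3: "card (X \<inter> Y) \<le> card (X \<union> Y)" using assms by (intro card_mono) auto
  show ?thesis using e c1 c2 c3 by simp
qed

lemma even_inv:
  fixes A :: "bit ^ 'n ^ 'n"
  assumes ev: "\<forall>v\<in>T. even (card (D A v \<inter> T))"
  shows "X \<in> Rf A T \<Longrightarrow> even (card (X \<inter> T))"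
proof (induction X rule: Rf.induct)
  case Rf0 thus ?case by simp
next
  case (RfS X i)
  have "sd X (D A i) \<inter> T = sd (X \<inter> T) (D A i \<inter> T)" by (rule sd_Int)
  moreover have "card (sd (X \<inter> T) (D A i \<inter> T)) + 2 * card ((X \<inter> T) \<inter> (D A i \<inter> T)) = card (X \<inter> T) + card (D A i \<inter> T)"
    by (rule card_sd) auto
  moreover have "even (card (D A i \<inter> T))" using ev RfS.hyps(2) by blast
  ultimately show ?case using RfS.IH by (metis even_add even_mult_iff even_numeral)
qed

lemma g_inter: "(\<lambda>X. Fc T (flip q X)) ` Rf A T = (\<lambda>X. Fc T (flip q X)) ` ((\<lambda>Y. Y \<inter> T) ` Rf A T)"
  using Fc_inter[of T q] by (auto simp: image_image)

lemma g_inj: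
  assumes "signed T q"
  shows "inj_on (\<lambda>X. Fc T (flip q X)) (Pow T)"
proof (rule inj_onI)
  fix X Y assume XY: "X \<in> Pow T" "Y \<in> Pow T" "Fc T (flip q X) = Fc T (flip q Y)"
  have qc: "q \<in> cube" and qa: "\<forall>i\<in>T. \<bar>q$i\<bar> = 1/4" using assms by (auto simp: signed_def)
  have "flip q X \<in> Fc T (flip q X)" using qc by (simp add: Fc_def flip_cube)
  hence "flip q X \<in> Fc T (flip q Y)" using XY(3) by simp
  hence eq: "\<forall>i\<in>T. flip q X $ i = flip q Y $ i" by (simp add: Fc_def)
  show "X = Y"
  proof (rule set_eqI)
    fix i show "i \<in> X \<longleftrightarrow> i \<in> Y"
    proof (cases "i \<in> T")
      case True
      hence "q$i \<noteq> 0" using qa by auto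
      thus ?thesis using eq True by (auto split: if_splits)
    next
      case False thus ?thesis using XY by auto
    qed
  qed
qed

lemma bott_perfect:
  fixes A :: "bit ^ 'n ^ 'n"
  assumes "bott_matrix A"
  shows "perfect A"
  unfolding perfect_def
proof (intro allI impI)
  fix f :: "(real^'n) set" assume "proper_face f"
  then obtain T and q :: "real^'n" where H: "signed T q" "T \<noteq> {}" "f = Fc T q" by (auto simp: proper_face_iff)
  let ?g = "\<lambda>X. Fc T (flip q X)"
  have "(\<lambda>Y. Y \<inter> T) ` Rf A T = Pow T"
  proof
    show "(\<lambda>Y. Y \<inter> T) ` Rf A T \<subseteq> Pow T" by auto
    show "Pow T \<subseteq> (\<lambda>Y. Y \<inter> T) ` Rf A T"
    proof
      fix X assume "X \<in> Pow T"
      then obtain Y where "Y \<in> Rf A T" "Y \<inter> T = X" using bott_reach[OF assms] by blast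
      thus "X \<in> (\<lambda>Y. Y \<inter> T) ` Rf A T" by blast
    qed
  qed
  hence "face_family A f = ?g ` Pow T" using family_char[OF H(1)] g_inter H(3) by metis
  hence "card (face_family A f) = card (Pow T)" using card_image[OF g_inj[OF H(1)]] by simp
  also have "\<dots> = 2 ^ card T" by (simp add: card_Pow)
  finally show "card (face_family A f) = 2 ^ codim f" using Fc_codim[OF H(1)] H(3) by simp
qed

lemma perfect_bott:
  fixes A :: "bit ^ 'n ^ 'n"
  assumes P: "perfect A" and diag: "\<forall>i. A$i$i = 0"
  shows "bott_matrix A"
proof (rule ccontr)
  assume "\<not> bott_matrix A"
  then obtain T where T: "T \<noteq> {}" "\<forall>v\<in>T. \<exists>u. u \<noteq> v \<and> {w\<in>T. A$v$w = 1} = {u}"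
    using cyc_set[OF \<open>\<not> bott_matrix A\<close> diag] by blast
  have ev: "\<forall>v\<in>T. even (card (D A v \<inter> T))"
  proof
    fix v assume vT: "v \<in> T"
    then obtain u where u: "u \<noteq> v" "{w\<in>T. A$v$w = 1} = {u}" using T(2) by blast
    have "D A v \<inter> T = insert v {w\<in>T. A$v$w = 1}" using vT unfolding D_def by blast
    also have "\<dots> = {v, u}" using u(2) by simp
    finally show "even (card (D A v \<inter> T))" using u(1) by simp
  qed
  define q :: "real^'n" where "q = (\<chi> k. if k \<in> T then 1/4 else 0)"
  have s1: "\<bar>q$i\<bar> \<le> 1/4" for i by (simp add: q_def)
  have s2: "\<bar>q$i\<bar> = 1/4" if "i \<in> T" for i using that by (simp add: q_def)
  have sg: "signed T q" unfolding signed_def cube_iff using s1 s2 by blast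
  have pf: "proper_face (Fc T q)" using sg T(1) proper_face_iff by blast
  let ?g = "\<lambda>X. Fc T (flip q X)"
  obtain t0 where t0: "t0 \<in> T" using T(1) by blast
  have "(\<lambda>Y. Y \<inter> T) ` Rf A T \<subseteq> Pow T - {{t0}}"
  proof
    fix Z assume "Z \<in> (\<lambda>Y. Y \<inter> T) ` Rf A T"
    then obtain Y where Y: "Y \<in> Rf A T" "Z = Y \<inter> T" by blast
    have "even (card Z)" using even_inv[OF ev Y(1)] Y(2) by simp
    hence "Z \<noteq> {t0}" by auto
    thus "Z \<in> Pow T - {{t0}}" using Y(2) by auto
  qed
  hence "?g ` ((\<lambda>Y. Y \<inter> T) ` Rf A T) \<subseteq> ?g ` (Pow T - {{t0}})" by (rule image_mono)
  moreover have "face_family A (Fc T q) = ?g ` ((\<lambda>Y. Y \<inter> T) ` Rf A T)"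
    using family_char[OF sg] g_inter by simp
  ultimately have "face_family A (Fc T q) \<subseteq> ?g ` (Pow T - {{t0}})" by simp
  hence "card (face_family A (Fc T q)) \<le> card (?g ` (Pow T - {{t0}}))"
    by (intro card_mono) auto
  also have "\<dots> \<le> card (Pow T - {{t0}})" by (intro card_image_le) auto
  also have "\<dots> = 2 ^ card T - 1" using t0 by (simp add: card_Pow)
  finally have "card (face_family A (Fc T q)) \<le> 2 ^ card T - 1" .
  moreover have "card (face_family A (Fc T q)) = 2 ^ card T"
    using P pf Fc_codim[OF sg] unfolding perfect_def by simp
  moreover have "(2::nat) ^ card T \<ge> 1" by simp
  ultimately show False by linarith
qed

theorem mainTheorem12:
  fixes A :: "bit ^ 'n ^ 'n"
  assumes "CARD('n) \<ge> 2"
    and "\<forall>i. A $ i $ i = 0"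
  shows "perfect A \<longleftrightarrow> bott_matrix A"
  using perfect_bott[OF _ assms(2)] bott_perfect by blast

end
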